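(* Let $d\ge1$, let $\pi_1,\dots,\pi_n>0$ with $\sum_i\pi_i=1$, and let $b_1,\dots,b_N$ be a basis of $V_d=\{p\in\mathbb{R}[x]_d:p(\mathbf1)=0\}$. Then there exists a positive definite $N\times N$ matrix $A$ such that $$\Big(\sum_{d'=0}^{d-1}\|x\|_\pi^{2d'}\Big)\,\|x-\mathbf1\|_\pi^2=b(x)^\top A\,b(x),\qquad b(x)=(b_1(x),\dots,b_N(x))^\top.$$
   Context: $\|x\|_\pi^2=\sum_i\pi_ix_i^2$; $\mathbf 1=(1,\dots,1)\in\mathbb{R}^n$; $\mathbb{R}[x]_k$ denotes real polynomials in $x=(x_1,\dots,x_n)$ of degree at most $k$. *)

theory Defs
  imports "HOL-Analysis.Analysis"
begin

definition monomial_fn :: "('n::finite \<Rightarrow> nat) \<Rightarrow> real^'n \<Rightarrow> real" where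
  "monomial_fn \<alpha> x = (\<Prod>i\<in>UNIV. (x $ i) ^ (\<alpha> i))"

definition poly_deg_le :: "nat \<Rightarrow> (real^'n::finite \<Rightarrow> real) set" where
  "poly_deg_le d = {p. \<exists>c :: ('n \<Rightarrow> nat) \<Rightarrow> real.
      p = (\<lambda>x. \<Sum>\<alpha>\<in>{\<alpha>. sum \<alpha> UNIV \<le> d}. c \<alpha> * monomial_fn \<alpha> x)}"

definition V_space :: "nat \<Rightarrow> (real^'n::finite \<Rightarrow> real) set" where
  "V_space d = {p \<in> poly_deg_le d. p (vec 1) = 0}"

definition is_basis_of :: "(nat \<Rightarrow> ('a \<Rightarrow> real)) \<Rightarrow> nat \<Rightarrow> ('a \<Rightarrow> real) set \<Rightarrow> bool" where
  "is_basis_of b N W \<longleftrightarrow>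
     (\<forall>j<N. b j \<in> W) \<and>
     (\<forall>c. (\<forall>x. (\<Sum>j<N. c j * b j x) = 0) \<longrightarrow> (\<forall>j<N. c j = 0)) \<and>
     (\<forall>p\<in>W. \<exists>c. p = (\<lambda>x. \<Sum>j<N. c j * b j x))"

definition pos_def_mat :: "nat \<Rightarrow> (nat \<Rightarrow> nat \<Rightarrow> real) \<Rightarrow> bool" where
  "pos_def_mat N A \<longleftrightarrow>
     (\<forall>i<N. \<forall>j<N. A i j = A j i) \<and>
     (\<forall>v. (\<exists>i<N. v i \<noteq> 0) \<longrightarrow> (\<Sum>i<N. \<Sum>j<N. v i * A i j * v j) > 0)"

definition wnorm2 :: "('n::finite \<Rightarrow> real) \<Rightarrow> real^'n \<Rightarrow> real" where
  "wnorm2 \<pi> x = (\<Sum>i\<in>UNIV. \<pi> i * (x $ i)^2)"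

end

theory Submission
  imports Defs
begin

lemma quad_form:
  fixes u :: "nat \<Rightarrow> real"
  assumes "finite K"
  shows "(\<Sum>i<N. \<Sum>j<N. u i * (\<Sum>k\<in>K. w k * M k i * M k j) * u j)
        = (\<Sum>k\<in>K. w k * (\<Sum>i<N. M k i * u i)^2)"
proof -
  have "(\<Sum>k\<in>K. w k * (\<Sum>i<N. M k i * u i)^2)
      = (\<Sum>k\<in>K. \<Sum>i<N. \<Sum>j<N. u i * (w k * M k i * M k j) * u j)"
    by (simp add: power2_eq_square sum_product sum_distrib_left mult_ac)
  also have "\<dots> = (\<Sum>i<N. \<Sum>k\<in>K. \<Sum>j<N. u i * (w k * M k i * M k j) * u j)"
    by (rule sum.swap)
  also have "\<dots> = (\<Sum>i<N. \<Sum>j<N. \<Sum>k\<in>K. u i * (w k * M k i * M k j) * u j)"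
    by (rule sum.cong[OF refl], rule sum.swap)
  also have "\<dots> = (\<Sum>i<N. \<Sum>j<N. u i * (\<Sum>k\<in>K. w k * M k i * M k j) * u j)"
    by (simp add: sum_distrib_left sum_distrib_right)
  finally show ?thesis by simp
qed

lemma gram:
  fixes K :: "'k set" and w :: "'k \<Rightarrow> real" and g :: "'k \<Rightarrow> 'a \<Rightarrow> real"
    and b :: "nat \<Rightarrow> 'a \<Rightarrow> real"
  assumes fin: "finite K" and wpos: "\<forall>k\<in>K. w k > 0"
    and basis: "is_basis_of b N W" and gW: "\<forall>k\<in>K. g k \<in> W"
    and span: "\<forall>j<N. \<exists>lam. \<forall>x. b j x = (\<Sum>k\<in>K. lam k * g k x)"
  shows "\<exists>A. pos_def_mat N A \<and>
     (\<forall>x. (\<Sum>k\<in>K. w k * (g k x)^2) = (\<Sum>i<N. \<Sum>j<N. b i x * A i j * b j x))"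
proof -
  from basis have ind: "\<forall>c. (\<forall>x. (\<Sum>j<N. c j * b j x) = 0) \<longrightarrow> (\<forall>j<N. c j = 0)"
    and sp: "\<forall>p\<in>W. \<exists>c. p = (\<lambda>x. \<Sum>j<N. c j * b j x)" by (auto simp: is_basis_of_def)
  have "\<forall>k\<in>K. \<exists>c. \<forall>x. g k x = (\<Sum>i<N. c i * b i x)" using gW sp by metis
  then have "\<exists>M. \<forall>k\<in>K. \<forall>x. g k x = (\<Sum>i<N. M k i * b i x)" by (rule bchoice)
  then obtain M where M: "\<forall>k\<in>K. \<forall>x. g k x = (\<Sum>i<N. M k i * b i x)" by blast
  from span obtain L where L: "\<forall>j<N. \<forall>x. b j x = (\<Sum>k\<in>K. L j k * g k x)" by metis
  define A where "A i j = (\<Sum>k\<in>K. w k * M k i * M k j)" for i j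
  have delta: "\<forall>i<N. (\<Sum>k\<in>K. L j k * M k i) = (if i = j then 1 else 0)" if j: "j < N" for j
  proof -
    define c where "c i = (if i = j then 1 else 0) - (\<Sum>k\<in>K. L j k * M k i)" for i
    have "\<forall>x. (\<Sum>i<N. c i * b i x) = 0"
    proof
      fix x
      have "(\<Sum>i<N. c i * b i x) = (\<Sum>i<N. (if i = j then b i x else 0))
              - (\<Sum>i<N. \<Sum>k\<in>K. L j k * M k i * b i x)"
      proof -
        have "\<And>i. c i * b i x = (if i = j then b i x else 0) - (\<Sum>k\<in>K. L j k * M k i * b i x)"
        proof -
          fix i
          have "(\<Sum>k\<in>K. L j k * M k i * b i x) = (\<Sum>k\<in>K. L j k * M k i) * b i x"
            by (rule sum_distrib_right[symmetric])
          then show "c i * b i x = (if i = j then b i x else 0) - (\<Sum>k\<in>K. L j k * M k i * b i x)"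
            by (simp add: c_def left_diff_distrib)
        qed
        then show ?thesis by (simp add: sum_subtractf)
      qed
      also have "(\<Sum>i<N. (if i = j then b i x else 0)) = b j x" using j by simp
      also have "(\<Sum>i<N. \<Sum>k\<in>K. L j k * M k i * b i x) = (\<Sum>k\<in>K. \<Sum>i<N. L j k * M k i * b i x)"
        by (rule sum.swap)
      also have "\<dots> = (\<Sum>k\<in>K. L j k * g k x)" using M
        by (simp add: sum_distrib_left mult.assoc)
      also have "\<dots> = b j x" using L j by simp
      finally show "(\<Sum>i<N. c i * b i x) = 0" by simp
    qed
    then have "\<forall>i<N. c i = 0" using ind by blast
    then show ?thesis by (simp add: c_def)
  qed
  have pd: "pos_def_mat N A"
    unfolding pos_def_mat_def
  proof (intro conjI allI impI)
    fix i j show "A i j = A j i" by (simp add: A_def mult_ac)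
  next
    fix v :: "nat \<Rightarrow> real" assume "\<exists>i<N. v i \<noteq> 0"
    then obtain j where j: "j < N" "v j \<noteq> 0" by blast
    have eq: "(\<Sum>i<N. \<Sum>j<N. v i * A i j * v j) = (\<Sum>k\<in>K. w k * (\<Sum>i<N. M k i * v i)^2)"
      unfolding A_def by (rule quad_form[OF fin])
    have nn: "\<forall>k\<in>K. 0 \<le> w k * (\<Sum>i<N. M k i * v i)^2" using wpos by (simp add: less_imp_le)
    show "(\<Sum>i<N. \<Sum>j<N. v i * A i j * v j) > 0"
    proof (rule ccontr)
      assume neg: "\<not> ?thesis"
      then have "(\<Sum>k\<in>K. w k * (\<Sum>i<N. M k i * v i)^2) = 0"
      proof -
        have "0 \<le> (\<Sum>k\<in>K. w k * (\<Sum>i<N. M k i * v i)^2)"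
          using nn by (simp add: sum_nonneg)
        then show ?thesis using eq neg by linarith
      qed
      then have "\<forall>k\<in>K. w k * (\<Sum>i<N. M k i * v i)^2 = 0"
        using sum_nonneg_eq_0_iff[OF fin, of "\<lambda>k. w k * (\<Sum>i<N. M k i * v i)^2"] nn by simp
      then have z: "\<forall>k\<in>K. (\<Sum>i<N. M k i * v i) = 0" using wpos by (simp add: less_imp_neq[symmetric])
      have "v j = (\<Sum>i<N. (if i = j then v i else 0))" using j by simp
      also have "\<dots> = (\<Sum>i<N. (\<Sum>k\<in>K. L j k * M k i) * v i)"
        using delta[OF j(1)] by (intro sum.cong) auto
      also have "\<dots> = (\<Sum>k\<in>K. L j k * (\<Sum>i<N. M k i * v i))"
      proof -
        have "(\<Sum>i<N. (\<Sum>k\<in>K. L j k * M k i) * v i) = (\<Sum>i<N. \<Sum>k\<in>K. L j k * (M k i * v i))"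
          by (simp add: sum_distrib_right mult.assoc)
        also have "\<dots> = (\<Sum>k\<in>K. \<Sum>i<N. L j k * (M k i * v i))" by (rule sum.swap)
        also have "\<dots> = (\<Sum>k\<in>K. L j k * (\<Sum>i<N. M k i * v i))" by (simp add: sum_distrib_left)
        finally show ?thesis .
      qed
      also have "\<dots> = 0" using z by simp
      finally show False using j by simp
    qed
  qed
  show ?thesis
  proof (intro exI conjI allI)
    show "pos_def_mat N A" by (rule pd)
  next
    fix x
    have "(\<Sum>k\<in>K. w k * (g k x)^2) = (\<Sum>k\<in>K. w k * (\<Sum>i<N. M k i * b i x)^2)"
      using M by simp
    also have "\<dots> = (\<Sum>i<N. \<Sum>j<N. b i x * A i j * b j x)"
      unfolding A_def by (rule quad_form[OF fin, symmetric])
    finally show "(\<Sum>k\<in>K. w k * (g k x)^2) = (\<Sum>i<N. \<Sum>j<N. b i x * A i j * b j x)" .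
  qed
qed


definition Pl :: "'n::finite list \<Rightarrow> real^'n \<Rightarrow> real" where
  "Pl l x = prod_list (map (\<lambda>i. x$i) l)"

lemma finite_S: "finite {\<alpha>::'n::finite \<Rightarrow> nat. sum \<alpha> UNIV \<le> d}"
proof (rule finite_subset[of _ "PiE UNIV (\<lambda>_. {..d})"])
  show "{\<alpha>::'n \<Rightarrow> nat. sum \<alpha> UNIV \<le> d} \<subseteq> PiE UNIV (\<lambda>_. {..d})"
  proof
    fix \<alpha> :: "'n \<Rightarrow> nat" assume "\<alpha> \<in> {\<alpha>. sum \<alpha> UNIV \<le> d}"
    then have "\<alpha> i \<le> d" for i using member_le_sum[of i UNIV \<alpha>] by auto
    then show "\<alpha> \<in> PiE UNIV (\<lambda>_. {..d})" by (auto simp: PiE_def extensional_def)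
  qed
  show "finite (PiE (UNIV::'n set) (\<lambda>_. {..d}))" by (rule finite_PiE) auto
qed

lemma mono_vec1: "monomial_fn \<alpha> (vec 1) = 1" by (simp add: monomial_fn_def)

lemma count_cons: "count_list (a#l) = (\<lambda>i. count_list l i + (if i = a then 1 else 0))"
  by (auto simp: fun_eq_iff)

lemma mono_add1: "monomial_fn (\<lambda>i. \<alpha> i + (if i = a then 1 else 0)) x = x$a * monomial_fn \<alpha> x"
proof -
  have "(\<Prod>i\<in>UNIV. (x$i)^(\<alpha> i + (if i = a then 1 else 0))) = (\<Prod>i\<in>UNIV. (x$i)^(\<alpha> i) * (if i = a then x$i else 1))"
    by (rule prod.cong) (auto simp: power_add)
  also have "\<dots> = (\<Prod>i\<in>UNIV. (x$i)^(\<alpha> i)) * x$a"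
    by (simp add: prod.distrib prod.delta)
  finally show ?thesis unfolding monomial_fn_def by simp
qed

lemma sum_add1: "sum (\<lambda>i. \<alpha> i + (if i = a then 1 else 0)) (UNIV::'n::finite set) = sum \<alpha> UNIV + 1"
  by (simp add: sum.distrib)

lemma count_len: "sum (count_list l) (UNIV::'n::finite set) = length l"
  by (induction l) (simp_all add: count_cons sum_add1)

lemma mono_count: "monomial_fn (count_list l) x = Pl l x"
proof (induction l)
  case Nil
  have "count_list [] = (\<lambda>_. 0)" by (simp add: fun_eq_iff)
  then show ?case by (simp add: monomial_fn_def Pl_def)
next
  case (Cons a l)
  then show ?case by (simp add: count_cons mono_add1 Pl_def)
qed

lemma exists_list: "\<exists>l::'n::finite list. count_list l = \<alpha>"
proof (induction "sum \<alpha> UNIV" arbitrary: \<alpha>)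
  case 0
  then have "\<alpha> = (\<lambda>_. 0)" by (simp add: fun_eq_iff)
  then show ?case by (intro exI[of _ "[]"]) (simp add: fun_eq_iff)
next
  case (Suc n)
  obtain a where a: "\<alpha> a > 0"
  proof (rule ccontr)
    assume "\<not> thesis"
    then have "\<forall>i. \<alpha> i = 0" using that by auto
    then show False using Suc(2) by simp
  qed
  define \<alpha>' where "\<alpha>' i = \<alpha> i - (if i = a then 1 else 0)" for i
  have eq: "\<alpha> = (\<lambda>i. \<alpha>' i + (if i = a then 1 else 0))" using a by (auto simp: fun_eq_iff \<alpha>'_def)
  have "sum \<alpha> UNIV = sum \<alpha>' UNIV + 1" by (subst eq) (rule sum_add1)
  then have "n = sum \<alpha>' UNIV" using Suc(2) by simp
  then obtain l where "count_list l = \<alpha>'" using Suc(1) by blast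
  then have "count_list (a#l) = \<alpha>" by (simp add: count_cons eq)
  then show ?case by blast
qed

lemma g_in_V:
  assumes "length l < d"
  shows "(\<lambda>x. Pl l x * (x$j - 1)) \<in> V_space d"
proof -
  define \<alpha> where "\<alpha> = count_list l"
  define \<beta> where "\<beta> = (\<lambda>i. \<alpha> i + (if i = j then 1 else 0))"
  define S where "S = {\<alpha>::'a \<Rightarrow> nat. sum \<alpha> UNIV \<le> d}"
  have aS: "\<alpha> \<in> S" using assms by (simp add: S_def \<alpha>_def count_len)
  have bS: "\<beta> \<in> S" using assms by (simp add: S_def \<beta>_def sum_add1 \<alpha>_def count_len)
  define c where "c \<gamma> = (if \<gamma> = \<beta> then 1 else 0) - (if \<gamma> = \<alpha> then (1::real) else 0)" for \<gamma>
  have rep: "Pl l x * (x$j - 1) = (\<Sum>\<gamma>\<in>S. c \<gamma> * monomial_fn \<gamma> x)" for x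
  proof -
    have "(\<Sum>\<gamma>\<in>S. c \<gamma> * monomial_fn \<gamma> x)
       = (\<Sum>\<gamma>\<in>S. (if \<gamma> = \<beta> then monomial_fn \<gamma> x else 0)) - (\<Sum>\<gamma>\<in>S. (if \<gamma> = \<alpha> then monomial_fn \<gamma> x else 0))"
      by (simp add: c_def left_diff_distrib sum_subtractf if_distrib[of "\<lambda>t. t * _"] cong: if_cong)
    also have "\<dots> = monomial_fn \<beta> x - monomial_fn \<alpha> x"
      unfolding S_def sum.delta[OF finite_S] using aS bS by (simp add: S_def)
    also have "\<dots> = Pl l x * (x$j - 1)"
      by (simp add: \<beta>_def mono_add1 \<alpha>_def mono_count algebra_simps)
    finally show ?thesis by simp
  qed
  have "(\<lambda>x. Pl l x * (x$j - 1)) \<in> poly_deg_le d"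
    unfolding poly_deg_le_def mem_Collect_eq
    by (rule exI[of _ c]) (simp add: rep[unfolded S_def] fun_eq_iff)
  moreover have "Pl l (vec 1) * ((vec 1 :: real^'a) $ j - 1) = 0" by simp
  ultimately show ?thesis unfolding V_space_def by simp
qed

lemma power_expand:
  fixes f :: "'n::finite \<Rightarrow> real"
  shows "(\<Sum>i\<in>(UNIV::'n::finite set). f i)^m = (\<Sum>l\<in>{l::'n list. length l = m}. prod_list (map f l))"
proof (induction m)
  case 0
  have "{l::'n list. length l = 0} = {[]}" by auto
  then show ?case by simp
next
  case (Suc m)
  have fin: "finite {l::'n list. length l = m}"
    using finite_lists_length_eq[of "UNIV::'n set" m] by simp
  have im: "{l::'n list. length l = Suc m} = (\<lambda>(i,l). i#l) ` (UNIV \<times> {l. length l = m})"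
    by (auto simp: length_Suc_conv image_def)
  have inj: "inj_on (\<lambda>(i,l). i#l) (UNIV \<times> {l::'n list. length l = m})"
    by (auto simp: inj_on_def)
  have "(\<Sum>l\<in>{l::'n list. length l = Suc m}. prod_list (map f l))
      = (\<Sum>(i,l)\<in>UNIV \<times> {l::'n list. length l = m}. f i * prod_list (map f l))"
    unfolding im by (subst sum.reindex[OF inj]) (simp add: case_prod_beta)
  also have "\<dots> = (\<Sum>i\<in>UNIV. \<Sum>l\<in>{l::'n list. length l = m}. f i * prod_list (map f l))"
    by (rule sum.cartesian_product[symmetric])
  also have "\<dots> = (\<Sum>i\<in>UNIV. f i) * (\<Sum>l\<in>{l::'n list. length l = m}. prod_list (map f l))"
    by (rule sum_product[symmetric])
  finally show ?case using Suc by simp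
qed

lemma pl_sq: "prod_list (map (\<lambda>i. \<pi> i * (x$i)^2) l) = prod_list (map \<pi> l) * (Pl l x)^2"
  by (induction l) (simp_all add: Pl_def power_mult_distrib)


lemma prod_list_pos: "(\<forall>i. (\<pi>::'a \<Rightarrow> real) i > 0) \<Longrightarrow> prod_list (map \<pi> l) > 0"
  by (induction l) simp_all

theorem mainTheorem9:
  fixes d N :: nat and \<pi> :: "'n::finite \<Rightarrow> real" and b :: "nat \<Rightarrow> (real^'n \<Rightarrow> real)"
  assumes "d \<ge> 1"
    and "\<forall>i. \<pi> i > 0" and "(\<Sum>i\<in>UNIV. \<pi> i) = 1"
    and "is_basis_of b N (V_space d)"
  shows "\<exists>A. pos_def_mat N A \<and>
     (\<forall>x::real^'n. (\<Sum>d'<d. (wnorm2 \<pi> x) ^ d') * wnorm2 \<pi> (x - vec 1)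
        = (\<Sum>i<N. \<Sum>j<N. b i x * A i j * b j x))"
proof -
  define K where "K = (SIGMA m:{..<d}. ({l::'n list. length l = m} \<times> (UNIV::'n set)))"
  define w where "w k = (case k of (m,(l,j)) \<Rightarrow> prod_list (map \<pi> l) * \<pi> j)" for k :: "nat \<times> 'n list \<times> 'n"
  define g where "g k = (case k of (m,(l,j)) \<Rightarrow> (\<lambda>x::real^'n. Pl l x * (x$j - 1)))" for k :: "nat \<times> 'n list \<times> 'n"
  have finL: "finite {l::'n list. length l = m}" for m
    using finite_lists_length_eq[of "UNIV::'n set" m] by simp
  have finK: "finite K" unfolding K_def
    using finL by (intro finite_SigmaI finite_cartesian_product) auto
  have wpos: "\<forall>k\<in>K. w k > 0"
    using assms(2) prod_list_pos[of \<pi>] by (auto simp: K_def w_def)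
  have gW: "\<forall>k\<in>K. g k \<in> V_space d"
    by (auto simp: K_def g_def intro!: g_in_V)
  have G1: "\<exists>lam. \<forall>x. Pl l x - 1 = (\<Sum>k\<in>K. lam k * g k x)" if "length l \<le> d" for l
    using that
  proof (induction l)
    case Nil
    show ?case by (rule exI[of _ "\<lambda>_. 0"]) (simp add: Pl_def)
  next
    case (Cons a l)
    then obtain lam where lam: "\<forall>x. Pl l x - 1 = (\<Sum>k\<in>K. lam k * g k x)" by auto
    define k0 where "k0 = (length l, (l, a))"
    have k0K: "k0 \<in> K" using Cons(2) by (simp add: K_def k0_def)
    define lam' where "lam' k = lam k + (if k = k0 then 1 else 0)" for k
    have "Pl (a#l) x - 1 = (\<Sum>k\<in>K. lam' k * g k x)" for x
    proof -
      have "(\<Sum>k\<in>K. lam' k * g k x) = (\<Sum>k\<in>K. lam k * g k x) + (\<Sum>k\<in>K. (if k = k0 then g k x else 0))"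
        by (simp add: lam'_def distrib_right sum.distrib if_distrib[of "\<lambda>t. t * _"] cong: if_cong)
      also have "\<dots> = (Pl l x - 1) + g k0 x" using lam k0K finK by simp
      also have "\<dots> = Pl (a#l) x - 1" by (simp add: g_def k0_def Pl_def algebra_simps)
      finally show ?thesis by simp
    qed
    then show ?case by blast
  qed
  have G2: "\<exists>lam. \<forall>x. monomial_fn \<alpha> x - 1 = (\<Sum>k\<in>K. lam k * g k x)" if "sum \<alpha> UNIV \<le> d" for \<alpha>
  proof -
    obtain l where l: "count_list l = \<alpha>" using exists_list by blast
    have "length l \<le> d" using that l count_len[of l] by simp
    then show ?thesis using G1 mono_count[of l] l by auto
  qed
  define S where "S = {\<alpha>::'n \<Rightarrow> nat. sum \<alpha> UNIV \<le> d}"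
  have "\<forall>\<alpha>\<in>S. \<exists>lam. \<forall>x. monomial_fn \<alpha> x - 1 = (\<Sum>k\<in>K. lam k * g k x)"
    using G2 by (simp add: S_def)
  then have "\<exists>Lm. \<forall>\<alpha>\<in>S. \<forall>x. monomial_fn \<alpha> x - 1 = (\<Sum>k\<in>K. Lm \<alpha> k * g k x)" by (rule bchoice)
  then obtain Lm where Lm: "\<forall>\<alpha>\<in>S. \<forall>x. monomial_fn \<alpha> x - 1 = (\<Sum>k\<in>K. Lm \<alpha> k * g k x)" by blast
  have span: "\<forall>j<N. \<exists>lam. \<forall>x. b j x = (\<Sum>k\<in>K. lam k * g k x)"
  proof (intro allI impI)
    fix j assume j: "j < N"
    have "b j \<in> V_space d" using assms(4) j by (simp add: is_basis_of_def)
    then obtain c where c: "b j = (\<lambda>x. \<Sum>\<alpha>\<in>S. c \<alpha> * monomial_fn \<alpha> x)" and z: "b j (vec 1) = 0"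
      by (auto simp: V_space_def poly_deg_le_def S_def)
    have sc: "(\<Sum>\<alpha>\<in>S. c \<alpha>) = 0" using z c by (simp add: monomial_fn_def)
    have "b j x = (\<Sum>k\<in>K. (\<Sum>\<alpha>\<in>S. c \<alpha> * Lm \<alpha> k) * g k x)" for x
    proof -
      have "b j x = (\<Sum>\<alpha>\<in>S. c \<alpha> * monomial_fn \<alpha> x) - (\<Sum>\<alpha>\<in>S. c \<alpha>)" using c sc by simp
      also have "\<dots> = (\<Sum>\<alpha>\<in>S. c \<alpha> * (monomial_fn \<alpha> x - 1))"
        by (simp add: right_diff_distrib sum_subtractf)
      also have "\<dots> = (\<Sum>\<alpha>\<in>S. \<Sum>k\<in>K. c \<alpha> * (Lm \<alpha> k * g k x))"
        using Lm by (simp add: sum_distrib_left)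
      also have "\<dots> = (\<Sum>k\<in>K. \<Sum>\<alpha>\<in>S. c \<alpha> * (Lm \<alpha> k * g k x))" by (rule sum.swap)
      also have "\<dots> = (\<Sum>k\<in>K. (\<Sum>\<alpha>\<in>S. c \<alpha> * Lm \<alpha> k) * g k x)"
        by (simp add: sum_distrib_right mult.assoc)
      finally show ?thesis .
    qed
    then show "\<exists>lam. \<forall>x. b j x = (\<Sum>k\<in>K. lam k * g k x)"
      by (intro exI[of _ "\<lambda>k. \<Sum>\<alpha>\<in>S. c \<alpha> * Lm \<alpha> k"]) simp
  qed
  obtain A where A: "pos_def_mat N A"
    and eqA: "\<forall>x. (\<Sum>k\<in>K. w k * (g k x)^2) = (\<Sum>i<N. \<Sum>j<N. b i x * A i j * b j x)"
    using gram[OF finK wpos assms(4) gW span] by blast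
  have feq: "(\<Sum>d'<d. (wnorm2 \<pi> x) ^ d') * wnorm2 \<pi> (x - vec 1) = (\<Sum>k\<in>K. w k * (g k x)^2)" for x
  proof -
    have p: "(wnorm2 \<pi> x) ^ m = (\<Sum>l\<in>{l::'n list. length l = m}. prod_list (map \<pi> l) * (Pl l x)^2)" for m
      unfolding wnorm2_def power_expand pl_sq ..
    have q: "wnorm2 \<pi> (x - vec 1) = (\<Sum>j\<in>UNIV. \<pi> j * (x$j - 1)^2)" by (simp add: wnorm2_def)
    have "(\<Sum>d'<d. (wnorm2 \<pi> x) ^ d') * wnorm2 \<pi> (x - vec 1)
       = (\<Sum>m<d. (\<Sum>l\<in>{l::'n list. length l = m}. prod_list (map \<pi> l) * (Pl l x)^2) * (\<Sum>j\<in>UNIV. \<pi> j * (x$j - 1)^2))"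
      unfolding p q by (simp add: sum_distrib_right)
    also have "\<dots> = (\<Sum>m<d. \<Sum>l\<in>{l::'n list. length l = m}. \<Sum>j\<in>UNIV. (prod_list (map \<pi> l) * (Pl l x)^2) * (\<pi> j * (x$j - 1)^2))"
      by (simp add: sum_product)
    also have "\<dots> = (\<Sum>m<d. \<Sum>l\<in>{l::'n list. length l = m}. \<Sum>j\<in>UNIV. w (m,(l,j)) * (g (m,(l,j)) x)^2)"
      by (simp add: w_def g_def power_mult_distrib mult_ac)
    also have "\<dots> = (\<Sum>m<d. \<Sum>lj\<in>{l::'n list. length l = m} \<times> UNIV. w (m,lj) * (g (m,lj) x)^2)"
      by (simp add: sum.cartesian_product case_prod_beta)
    also have "\<dots> = (\<Sum>k\<in>K. w k * (g k x)^2)"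
      unfolding K_def using finL by (subst sum.Sigma) (auto simp: case_prod_beta)
    finally show ?thesis .
  qed
  show ?thesis
  proof (intro exI conjI allI)
    show "pos_def_mat N A" by (rule A)
  next
    fix x :: "real^'n"
    show "(\<Sum>d'<d. (wnorm2 \<pi> x) ^ d') * wnorm2 \<pi> (x - vec 1)
        = (\<Sum>i<N. \<Sum>j<N. b i x * A i j * b j x)"
      by (rule trans[OF feq eqA[rule_format]])
  qed
qed

end
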